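(* Let $\mathbb F$ be a field of characteristic $p>2$, let $m\ge 1$, and let $\mathfrak h_m$ be the Heisenberg Lie algebra over $\mathbb F$ with basis $e_1,\dots,e_{2m+1}$ and only nonzero brackets $[e_i,e_{m+i}]=-[e_{m+i},e_i]=e_{2m+1}$ for $1\le i\le m$. For $\lambda=(\lambda_1,\dots,\lambda_{2m+1})\in\mathbb F^{2m+1}$ let $\mathfrak h_m^\lambda$ denote $\mathfrak h_m$ with the restricted structure ($[p]$-operator) given by $\left(\sum_{i=1}^{2m+1}a_ie_i\right)^{[p]}=\left(\sum_{i=1}^{2m+1}a_i^p\lambda_i\right)e_{2m+1}$ (i.e. the unique $[p]$-operator with $e_i^{[p]}=\lambda_ie_{2m+1}$). Let $\lambda,\lambda'\in\mathbb F^{2m+1}$. Then $\mathfrak h_m^\lambda$ and $\mathfrak h_m^{\lambda'}$ are isomorphic as restricted Lie algebras if and only if there exist an invertible matrix $A=(a_{ij})\in\mathbb F^{2m\times 2m}$, a vector $k=(k_1,\dots,k_{2m})\in\mathbb F^{2m}$ and a scalar $\mu\in\mathbb F$ with $(\det A)^2=\mu^{2m}$ such that (1) $A\begin{pmatrix}0&I_m\\-I_m&0\end{pmatrix}A^{t}=\mu\begin{pmatrix}0&I_m\\-I_m&0\end{pmatrix}$; (2) $\mu\begin{pmatrix}\lambda_1\\ \vdots\\ \lambda_{2m}\end{pmatrix}=A^{[p]}\begin{pmatrix}\lambda'_1\\ \vdots\\ \lambda'_{2m}\end{pmatrix}+\lambda'_{2m+1}\begin{pmatrix}k_1^p\\ \vdots\\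 k_{2m}^p\end{pmatrix}$, where $A^{[p]}=(a_{ij}^p)$; (3) $\lambda_{2m+1}=\mu^{p-1}\lambda'_{2m+1}$.
   Context: A restricted Lie algebra isomorphism is a Lie algebra isomorphism $\Psi$ satisfying $\Psi(g^{[p]})=\Psi(g)^{[p]'}$ for all $g$. $I_m$ denotes the $m\times m$ identity matrix and $A^t$ the transpose of $A$. *)

theory Defs
  imports "Jordan_Normal_Form.Determinant"
begin

text \<open>Heisenberg Lie algebra h_m over a field, realised on column vectors of
  dimension 2m+1 (0-based indices: e_1..e_(2m+1) of the paper correspond to
  the unit vectors with index 0..2m; the centre is spanned by index 2m).\<close>

definition heis_bracket :: "nat \<Rightarrow> 'a::field vec \<Rightarrow> 'a vec \<Rightarrow> 'a vec" where
  "heis_bracket m v w = vec (2*m+1) (\<lambda>i. if i = 2*m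
      then (\<Sum>j<m. v $ j * w $ (m+j) - v $ (m+j) * w $ j) else 0)"

definition heis_pmap :: "nat \<Rightarrow> 'a::field vec \<Rightarrow> 'a vec \<Rightarrow> 'a vec" where
  "heis_pmap m lam v = vec (2*m+1) (\<lambda>i. if i = 2*m
      then (\<Sum>j<2*m+1. v $ j ^ CHAR('a) * lam $ j) else 0)"

definition restricted_heis_iso :: "nat \<Rightarrow> 'a::field vec \<Rightarrow> 'a vec \<Rightarrow> ('a vec \<Rightarrow> 'a vec) \<Rightarrow> bool" where
  "restricted_heis_iso m lam lam' \<Psi> \<longleftrightarrow>
     bij_betw \<Psi> (carrier_vec (2*m+1)) (carrier_vec (2*m+1)) \<and>
     (\<forall>v\<in>carrier_vec (2*m+1). \<forall>w\<in>carrier_vec (2*m+1). \<Psi> (v + w) = \<Psi> v + \<Psi> w) \<and>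
     (\<forall>c. \<forall>v\<in>carrier_vec (2*m+1). \<Psi> (c \<cdot>\<^sub>v v) = c \<cdot>\<^sub>v \<Psi> v) \<and>
     (\<forall>v\<in>carrier_vec (2*m+1). \<forall>w\<in>carrier_vec (2*m+1).
        \<Psi> (heis_bracket m v w) = heis_bracket m (\<Psi> v) (\<Psi> w)) \<and>
     (\<forall>v\<in>carrier_vec (2*m+1). \<Psi> (heis_pmap m lam v) = heis_pmap m lam' (\<Psi> v))"

definition restricted_heis_isomorphic :: "nat \<Rightarrow> 'a::field vec \<Rightarrow> 'a vec \<Rightarrow> bool" where
  "restricted_heis_isomorphic m lam lam' \<longleftrightarrow> (\<exists>\<Psi>. restricted_heis_iso m lam lam' \<Psi>)"

definition symp_J :: "nat \<Rightarrow> 'a::field mat" where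
  "symp_J m = four_block_mat (0\<^sub>m m m) (1\<^sub>m m) (- 1\<^sub>m m) (0\<^sub>m m m)"

end

theory Submission
  imports Defs "HOL-Computational_Algebra.Primes"
begin


lemma frob_add:
  fixes x y :: "'a::comm_ring_1"
  assumes "prime CHAR('a)"
  shows "(x + y) ^ CHAR('a) = x ^ CHAR('a) + y ^ CHAR('a)"
proof -
  let ?p = "CHAR('a)"
  have p0: "?p > 0" using assms prime_gt_0_nat by blast
  have "(x + y) ^ ?p = (\<Sum>k\<le>?p. of_nat (?p choose k) * x ^ k * y ^ (?p - k))"
    by (rule binomial_ring)
  also have "\<dots> = (\<Sum>k\<in>{0, ?p}. of_nat (?p choose k) * x ^ k * y ^ (?p - k))"
  proof (rule sum.mono_neutral_right)
    show "\<forall>i\<in>{..?p} - {0, ?p}. of_nat (?p choose i) * x ^ i * y ^ (?p - i) = 0"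
    proof
      fix i assume i: "i \<in> {..?p} - {0, ?p}"
      have "?p dvd (?p choose i)" using i assms by (intro dvd_choose_prime) auto
      then have "(of_nat (?p choose i) :: 'a) = 0" by (simp add: of_nat_eq_0_iff_char_dvd)
      then show "of_nat (?p choose i) * x ^ i * y ^ (?p - i) = 0" by simp
    qed
  qed auto
  also have "\<dots> = x ^ ?p + y ^ ?p" using p0 by (simp add: add.commute)
  finally show ?thesis .
qed

lemma frob_sum:
  fixes f :: "'b \<Rightarrow> 'a::comm_ring_1"
  assumes "prime CHAR('a)"
  shows "(sum f S) ^ CHAR('a) = (\<Sum>i\<in>S. f i ^ CHAR('a))"
proof (induction S rule: infinite_finite_induct)
  case (infinite A) then show ?case using assms prime_gt_0_nat by (simp add: zero_power)
next
  case empty then show ?case using assms prime_gt_0_nat by (simp add: zero_power)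
next
  case (insert x F) then show ?case using frob_add[OF assms] by simp
qed

lemma symp_J_carrier[simp]: "symp_J m \<in> carrier_mat (2*m) (2*m)"
  unfolding symp_J_def by (metis four_block_carrier_mat mult_2 one_carrier_mat uminus_carrier_mat zero_carrier_mat)

lemma symp_J_dim[simp]: "dim_row (symp_J m) = 2*m" "dim_col (symp_J m) = 2*m"
  by (metis carrier_matD symp_J_carrier)+

lemma symp_J_index: "i < 2*m \<Longrightarrow> j < 2*m \<Longrightarrow> symp_J m $$ (i,j) =
   (if i < m \<and> j = m + i then 1 else if m \<le> i \<and> i = m + j then -1 else 0)"
  unfolding symp_J_def by auto

lemma symp_J_mult_vec:
  assumes y: "y \<in> carrier_vec (2*m)"
  shows "symp_J m *\<^sub>v y = vec (2*m) (\<lambda>i. if i < m then y $ (m+i) else - y $ (i-m))"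
proof (rule eq_vecI)
  show "dim_vec (symp_J m *\<^sub>v y) = dim_vec (vec (2*m) (\<lambda>i. if i < m then y $ (m+i) else - y $ (i-m)))"
    by simp
  fix i assume "i < dim_vec (vec (2*m) (\<lambda>i. if i < m then y $ (m+i) else - y $ (i-m)))"
  then have i: "i < 2*m" by simp
  have "(symp_J m *\<^sub>v y) $ i = (\<Sum>j<2*m. symp_J m $$ (i,j) * y $ j)"
    using i y by (simp add: scalar_prod_def atLeast0LessThan)
  also have "\<dots> = (\<Sum>j<2*m. (if j = (if i < m then m + i else i - m) then (if i < m then y $ (m+i) else - y $ (i-m)) else 0))"
    using i by (intro sum.cong) (auto simp: symp_J_index)
  also have "\<dots> = (if i < m then y $ (m+i) else - y $ (i-m))"
    using i by (subst sum.delta) auto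
  finally show "(symp_J m *\<^sub>v y) $ i = vec (2*m) (\<lambda>i. if i < m then y $ (m+i) else - y $ (i-m)) $ i"
    using i by simp
qed

definition omega :: "nat \<Rightarrow> 'a::field vec \<Rightarrow> 'a vec \<Rightarrow> 'a" where
  "omega m v w = (\<Sum>j<m. v $ j * w $ (m+j) - v $ (m+j) * w $ j)"

lemma heis_bracket_omega: "heis_bracket m v w = vec (2*m+1) (\<lambda>i. if i = 2*m then omega m v w else 0)"
  unfolding heis_bracket_def omega_def ..

lemma omega_vf: "omega m v w = omega m (vec_first v (2*m)) (vec_first w (2*m))"
  unfolding omega_def vec_first_def by (intro sum.cong) auto

lemma omega_J:
  assumes x: "x \<in> carrier_vec (2*m)" and y: "y \<in> carrier_vec (2*m)"
  shows "omega m x y = x \<bullet> (symp_J m *\<^sub>v y)"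
proof -
  let ?g = "\<lambda>i. x $ i * (if i < m then y $ (m+i) else - y $ (i-m))"
  have "x \<bullet> (symp_J m *\<^sub>v y) = (\<Sum>i\<in>{0..<2*m}. ?g i)"
    using x y by (simp add: symp_J_mult_vec scalar_prod_def)
  also have "\<dots> = (\<Sum>i\<in>{0..<m}. ?g i) + (\<Sum>i\<in>{m..<m+m}. ?g i)"
    unfolding mult_2 by (rule sum.atLeastLessThan_concat[symmetric]) auto
  also have "(\<Sum>i\<in>{m..<m+m}. ?g i) = (\<Sum>i\<in>{0..<m}. ?g (i+m))"
    using sum.shift_bounds_nat_ivl[of ?g 0 m m] by simp
  also have "(\<Sum>i\<in>{0..<m}. ?g i) + (\<Sum>i\<in>{0..<m}. ?g (i+m)) = omega m x y"
    unfolding omega_def atLeast0LessThan[symmetric]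
    by (simp add: sum_subtractf[symmetric] sum.distrib[symmetric] algebra_simps)
  finally show ?thesis by simp
qed

lemma key_transpose:
  fixes A :: "'a::field mat"
  assumes A: "A \<in> carrier_mat (2*m) (2*m)" and x: "x \<in> carrier_vec (2*m)" and y: "y \<in> carrier_vec (2*m)"
  shows "(transpose_mat A *\<^sub>v x) \<bullet> (symp_J m *\<^sub>v (transpose_mat A *\<^sub>v y))
     = x \<bullet> ((A * symp_J m * transpose_mat A) *\<^sub>v y)"
proof -
  have w: "symp_J m *\<^sub>v (transpose_mat A *\<^sub>v y) \<in> carrier_vec (2*m)"
    using A y by (metis mult_mat_vec_carrier symp_J_carrier transpose_carrier_mat)
  have "(transpose_mat A *\<^sub>v x) \<bullet> (symp_J m *\<^sub>v (transpose_mat A *\<^sub>v y))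
     = x \<bullet> (A *\<^sub>v (symp_J m *\<^sub>v (transpose_mat A *\<^sub>v y)))"
    by (rule transpose_vec_mult_scalar[OF A w x])
  also have "A *\<^sub>v (symp_J m *\<^sub>v (transpose_mat A *\<^sub>v y)) = (A * symp_J m * transpose_mat A) *\<^sub>v y"
  proof -
    have AJ: "A * symp_J m \<in> carrier_mat (2*m) (2*m)" using A by simp
    have ATy: "transpose_mat A *\<^sub>v y \<in> carrier_vec (2*m)" using A y by simp
    have "(A * symp_J m * transpose_mat A) *\<^sub>v y = (A * symp_J m) *\<^sub>v (transpose_mat A *\<^sub>v y)"
      using assoc_mult_mat_vec[OF AJ _ y, of "transpose_mat A"] A by simp
    also have "\<dots> = A *\<^sub>v (symp_J m *\<^sub>v (transpose_mat A *\<^sub>v y))"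
      using assoc_mult_mat_vec[OF A symp_J_carrier ATy] .
    finally show ?thesis by simp
  qed
  finally show ?thesis .
qed



lemma pmap_unit:
  fixes lam :: "'a::field vec"
  assumes i: "i < 2*m+1" and p: "CHAR('a) > 0"
  shows "heis_pmap m lam (c \<cdot>\<^sub>v unit_vec (2*m+1) i) = (c ^ CHAR('a) * lam $ i) \<cdot>\<^sub>v unit_vec (2*m+1) (2*m :: nat)"
proof (rule eq_vecI)
  fix l assume "l < dim_vec ((c ^ CHAR('a) * lam $ i) \<cdot>\<^sub>v unit_vec (2*m+1) (2*m :: nat))"
  then have l: "l < 2*m+1" by simp
  have "(\<Sum>j<2*m+1. ((c \<cdot>\<^sub>v unit_vec (2*m+1) i) $ j) ^ CHAR('a) * lam $ j)
      = (\<Sum>j<2*m+1. if j = i then c ^ CHAR('a) * (lam $ i :: 'a::field) else 0)"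
    using p by (intro sum.cong) (auto simp: unit_vec_def zero_power)
  also have "\<dots> = c ^ CHAR('a) * lam $ i" using i by (subst sum.delta) auto
  finally show "heis_pmap m lam (c \<cdot>\<^sub>v unit_vec (2*m+1) i) $ l = ((c ^ CHAR('a) * lam $ i) \<cdot>\<^sub>v unit_vec (2*m+1) (2*m :: nat)) $ l"
    using l unfolding heis_pmap_def by (auto simp: unit_vec_def)
qed (simp add: heis_pmap_def)

lemma mat_entry_unit:
  assumes M: "(M :: 'a::comm_ring_1 mat) \<in> carrier_mat n n" and i: "i < n" and j: "j < n"
  shows "M $$ (i,j) = unit_vec n i \<bullet> (M *\<^sub>v unit_vec n j)"
  using M i j by simp

lemma vf_unit: "i < n \<Longrightarrow> vec_first (unit_vec (n+1) i) n = unit_vec n i"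
  by (intro eq_vecI) (auto simp: vec_first_def unit_vec_def)

lemma omega_unit:
  assumes i: "i < 2*m" and j: "j < 2*m"
  shows "omega m (unit_vec (2*m+1) i) (unit_vec (2*m+1) j) = (symp_J m $$ (i,j) :: 'a::field)"
proof -
  have "omega m (unit_vec (2*m+1) i) (unit_vec (2*m+1) j) = omega m (unit_vec (2*m) i) (unit_vec (2*m) j :: 'a vec)"
  proof -
    have a: "vec_first (unit_vec (2*m+1) i) (2*m) = (unit_vec (2*m) i :: 'a vec)" by (rule vf_unit[OF i])
    have b: "vec_first (unit_vec (2*m+1) j) (2*m) = (unit_vec (2*m) j :: 'a vec)" by (rule vf_unit[OF j])
    show ?thesis by (subst omega_vf) (simp only: a b)
  qed
  also have "\<dots> = unit_vec (2*m) i \<bullet> (symp_J m *\<^sub>v unit_vec (2*m) j)"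
    by (rule omega_J) auto
  also have "\<dots> = symp_J m $$ (i,j)"
    by (rule sym, rule mat_entry_unit[OF symp_J_carrier i j])
  finally show ?thesis .
qed

lemma br_unit:
  assumes i: "i < 2*m" and j: "j < 2*m"
  shows "heis_bracket m (unit_vec (2*m+1) i) (unit_vec (2*m+1) j)
     = (symp_J m $$ (i,j) :: 'a::field) \<cdot>\<^sub>v unit_vec (2*m+1) (2*m)"
  unfolding heis_bracket_omega omega_unit[OF i j]
  by (intro eq_vecI) (auto simp: unit_vec_def)

lemma JJ_assoc:
  fixes v :: "'a::field vec"
  assumes v: "v \<in> carrier_vec (2*m)"
  shows "(symp_J m * symp_J m) *\<^sub>v v = symp_J m *\<^sub>v (symp_J m *\<^sub>v v)"
  by (rule assoc_mult_mat_vec[OF symp_J_carrier symp_J_carrier v])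

lemma JJ_unit: "(symp_J m * symp_J m) *\<^sub>v (unit_vec (2*m) j :: 'a::field vec) = symp_J m *\<^sub>v (symp_J m *\<^sub>v unit_vec (2*m) j)"
  by (rule JJ_assoc[OF unit_vec_carrier])

lemma JJu_carrier: "symp_J m *\<^sub>v (symp_J m *\<^sub>v (unit_vec (2*m) j :: 'a::field vec)) \<in> carrier_vec (2*m)"
  by (rule mult_mat_vec_carrier[OF symp_J_carrier mult_mat_vec_carrier[OF symp_J_carrier unit_vec_carrier]])

lemma JJ_entry:
  assumes i: "i < 2*m" and j: "j < 2*m"
  shows "(symp_J m * symp_J m :: 'a::field mat) $$ (i,j) = (symp_J m *\<^sub>v (symp_J m *\<^sub>v unit_vec (2*m) j)) $ i"
proof -
  have JJ: "(symp_J m * symp_J m :: 'a mat) \<in> carrier_mat (2*m) (2*m)" by (rule mult_carrier_mat[OF symp_J_carrier symp_J_carrier])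
  have 1: "(symp_J m * symp_J m :: 'a mat) $$ (i,j) = unit_vec (2*m) i \<bullet> ((symp_J m * symp_J m) *\<^sub>v unit_vec (2*m) j)"
    by (rule mat_entry_unit[OF JJ i j])
  show ?thesis unfolding 1 JJ_unit by (rule scalar_prod_left_unit[OF JJu_carrier i])
qed

lemma JJ_entry2:
  assumes i: "i < 2*m" and j: "j < 2*m"
  shows "(symp_J m *\<^sub>v (symp_J m *\<^sub>v (unit_vec (2*m) j :: 'a::field vec))) $ i = (if i = j then -1 else 0)"
proof -
  let ?u = "unit_vec (2*m) j :: 'a vec"
  let ?w = "vec (2*m) (\<lambda>l. if l < m then ?u $ (m+l) else - ?u $ (l-m))"
  have w: "symp_J m *\<^sub>v ?u = ?w" by (rule symp_J_mult_vec[OF unit_vec_carrier])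
  have wC: "?w \<in> carrier_vec (2*m)" by simp
  have "(symp_J m *\<^sub>v ?w) $ i = (if i < m then ?w $ (m+i) else - ?w $ (i-m))"
    using i by (simp only: symp_J_mult_vec[OF wC] index_vec)
  also have "\<dots> = - ?u $ i"
  proof (cases "i < m")
    case True then show ?thesis using i by simp
  next
    case False then show ?thesis using i by simp
  qed
  also have "\<dots> = (if i = j then -1 else 0)" using i j by simp
  finally show ?thesis unfolding w .
qed

lemma symp_J_sq0:
  fixes m :: nat and JJ :: "'a::field mat"
  assumes JJdef: "JJ = symp_J m * symp_J m"
  shows "JJ = - (1\<^sub>m (2*m) :: 'a mat)"
proof (rule eq_matI)
  have JJ: "JJ \<in> carrier_mat (2*m) (2*m)" unfolding JJdef by (rule mult_carrier_mat[OF symp_J_carrier symp_J_carrier])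
  then show "dim_row JJ = dim_row (- (1\<^sub>m (2*m) :: 'a mat))" "dim_col JJ = dim_col (- (1\<^sub>m (2*m) :: 'a mat))"
    by auto
  fix i j assume "i < dim_row (- (1\<^sub>m (2*m) :: 'a mat))" and "j < dim_col (- (1\<^sub>m (2*m) :: 'a mat))"
  then have i: "i < 2*m" and j: "j < 2*m" by auto
  show "JJ $$ (i,j) = (- (1\<^sub>m (2*m) :: 'a mat)) $$ (i,j)"
    unfolding JJdef JJ_entry[OF i j] JJ_entry2[OF i j] using i j by simp
qed

lemma symp_J_sq: "symp_J m * symp_J m = - (1\<^sub>m (2*m) :: 'a::field mat)"
  by (rule symp_J_sq0) (rule refl)

lemma det_symp_J: "det (symp_J m :: 'a::field mat) \<noteq> 0"
proof -
  have "det (symp_J m :: 'a mat) * det (symp_J m) = det (symp_J m * symp_J m :: 'a mat)"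
    by (rule det_mult[symmetric]) auto
  also have "\<dots> = det ((-1) \<cdot>\<^sub>m (1\<^sub>m (2*m)) :: 'a mat)"
    unfolding symp_J_sq by (rule arg_cong[where f=det]) (rule eq_matI, auto)
  also have "\<dots> = 1" by (simp add: power_mult)
  finally show ?thesis by auto
qed

lemma det_ne0_invertible:
  assumes A: "(A :: 'a::field mat) \<in> carrier_mat n n" and d: "det A \<noteq> 0"
  shows "invertible_mat A"
proof -
  have "A \<in> Units (ring_mat TYPE('a) n ())" by (rule det_non_zero_imp_unit[OF A d])
  then obtain B where B: "B \<in> carrier_mat n n" "B * A = 1\<^sub>m n" "A * B = 1\<^sub>m n"
    unfolding Units_def by (auto simp: ring_mat_simps)
  have dA: "dim_row A = n" "dim_col A = n" using A by auto
  have dB: "dim_row B = n" using B by auto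
  show ?thesis unfolding invertible_mat_def inverts_mat_def square_mat.simps
    using dA dB B by auto
qed



lemma vec_eq_split:
  assumes v: "v \<in> carrier_vec (2*m+1)" and w: "w \<in> carrier_vec (2*m+1)"
    and f: "vec_first v (2*m) = vec_first w (2*m)" and l: "v $ (2*m) = w $ (2*m)"
  shows "v = w"
proof (rule eq_vecI)
  show "dim_vec v = dim_vec w" using v w by simp
  fix i assume "i < dim_vec w"
  then have i: "i < 2*m+1" using w by simp
  show "v $ i = w $ i"
  proof (cases "i < 2*m")
    case True
    have "vec_first v (2*m) $ i = vec_first w (2*m) $ i" using f by simp
    then show ?thesis using True unfolding vec_first_def by simp
  next
    case False then have "i = 2*m" using i by simp
    then show ?thesis using l by simp
  qed
qed

lemma vf_add: "v \<in> carrier_vec (2*m+1) \<Longrightarrow> w \<in> carrier_vec (2*m+1) \<Longrightarrow>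
   vec_first (v + w) (2*m) = vec_first v (2*m) + vec_first w (2*m)"
  by (intro eq_vecI) (auto simp: vec_first_def)

lemma vf_smult: "v \<in> carrier_vec (2*m+1) \<Longrightarrow> vec_first (c \<cdot>\<^sub>v v) (2*m) = c \<cdot>\<^sub>v vec_first v (2*m)"
  by (intro eq_vecI) (auto simp: vec_first_def)

lemma mat_vec_zero: "A \<in> carrier_mat n n' \<Longrightarrow> A *\<^sub>v 0\<^sub>v n' = (0\<^sub>v n :: 'a::comm_ring_1 vec)"
  by (intro eq_vecI) auto

lemma smult_mat_vec: "A \<in> carrier_mat n n' \<Longrightarrow> v \<in> carrier_vec n' \<Longrightarrow>
   (c \<cdot>\<^sub>m A) *\<^sub>v v = c \<cdot>\<^sub>v (A *\<^sub>v (v :: 'a::comm_ring_1 vec))"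
  by (intro eq_vecI) (auto simp: scalar_prod_def sum_distrib_left ac_simps)

definition psi_map :: "nat \<Rightarrow> 'a::field mat \<Rightarrow> 'a vec \<Rightarrow> 'a \<Rightarrow> 'a vec \<Rightarrow> 'a vec" where
  "psi_map m A k \<mu> v = vec (2*m+1) (\<lambda>i. if i < 2*m then (transpose_mat A *\<^sub>v vec_first v (2*m)) $ i
       else k \<bullet> vec_first v (2*m) + \<mu> * v $ (2*m))"

lemma psi_C: "psi_map m A k \<mu> v \<in> carrier_vec (2*m+1)"
  unfolding psi_map_def by simp

lemma psi_vf: assumes A: "A \<in> carrier_mat (2*m) (2*m)"
  shows "vec_first (psi_map m A k \<mu> v) (2*m) = transpose_mat A *\<^sub>v vec_first v (2*m)"
  using A unfolding psi_map_def by (intro eq_vecI) (auto simp: vec_first_def)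

lemma psi_last: "psi_map m A k \<mu> v $ (2*m) = k \<bullet> vec_first v (2*m) + \<mu> * v $ (2*m)"
  unfolding psi_map_def by simp

lemma vf_bracket: "vec_first (heis_bracket m v w) (2*m) = 0\<^sub>v (2*m)"
  unfolding heis_bracket_def by (intro eq_vecI) (auto simp: vec_first_def)

lemma vf_pmap: "vec_first (heis_pmap m lam v) (2*m) = 0\<^sub>v (2*m)"
  unfolding heis_pmap_def by (intro eq_vecI) (auto simp: vec_first_def)

lemma backward:
  fixes lam lam' :: "'a::field vec" and A :: "'a mat" and k :: "'a vec" and \<mu> :: 'a
  assumes p: "CHAR('a) > 2" and m: "m \<ge> 1"
    and lam: "lam \<in> carrier_vec (2*m+1)" and lam': "lam' \<in> carrier_vec (2*m+1)"
    and AC: "A \<in> carrier_mat (2*m) (2*m)" and inv: "invertible_mat A" and kC: "k \<in> carrier_vec (2*m)"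
    and dt: "(det A)^2 = \<mu>^(2*m)"
    and e1: "A * symp_J m * transpose_mat A = \<mu> \<cdot>\<^sub>m symp_J m"
    and e2: "\<mu> \<cdot>\<^sub>v vec_first lam (2*m) =
         map_mat (\<lambda>x. x ^ CHAR('a)) A *\<^sub>v vec_first lam' (2*m)
         + lam' $ (2*m) \<cdot>\<^sub>v map_vec (\<lambda>x. x ^ CHAR('a)) k"
    and e3: "lam $ (2*m) = \<mu> ^ (CHAR('a) - 1) * lam' $ (2*m)"
  shows "restricted_heis_isomorphic m lam lam'"
proof -
  let ?p = "CHAR('a)"
  let ?C = "carrier_vec (2*m+1) :: 'a vec set"
  let ?F = "psi_map m A k \<mu>"
  have p0: "?p > 0" using p by simp
  have pr: "prime ?p" using prime_CHAR_semidom[OF p0] .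
  have ATC: "transpose_mat A \<in> carrier_mat (2*m) (2*m)" using AC by simp
  obtain B where AB: "A * B = 1\<^sub>m (dim_row A)" and BA: "B * A = 1\<^sub>m (dim_row B)"
    using inv unfolding invertible_mat_def inverts_mat_def by blast
  have dA: "dim_row A = 2*m" "dim_col A = 2*m" using AC by auto
  have dB1: "dim_col B = 2*m" using arg_cong[OF AB, of dim_col] dA by simp
  have dB2: "dim_row B = 2*m" using arg_cong[OF BA, of dim_col] dA by simp
  have BC: "B \<in> carrier_mat (2*m) (2*m)" using dB1 dB2 by auto
  have AB1: "A * B = 1\<^sub>m (2*m)" using AB dA by simp
  have BA1: "B * A = 1\<^sub>m (2*m)" using BA dB2 by simp
  have detA: "det A \<noteq> 0"
  proof
    assume "det A = 0"
    then have "det (A * B) = 0" using det_mult[OF AC BC] by simp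
    then show False unfolding AB1 by simp
  qed
  have mu0: "\<mu> \<noteq> 0"
  proof
    assume "\<mu> = 0"
    then have "(det A)^2 = 0" using dt m by simp
    then show False using detA by simp
  qed
  have BTC: "transpose_mat B \<in> carrier_mat (2*m) (2*m)" using BC by simp
  have BTAT: "transpose_mat B * transpose_mat A = 1\<^sub>m (2*m)"
    using transpose_mult[OF AC BC, symmetric] AB1 by simp
  have ATBT: "transpose_mat A * transpose_mat B = 1\<^sub>m (2*m)"
    using transpose_mult[OF BC AC, symmetric] BA1 by simp
  have FC: "\<And>v. ?F v \<in> ?C" by (rule psi_C)
  note Fvf = psi_vf[OF AC] and Flast = psi_last
  have Fadd: "\<forall>v\<in>?C. \<forall>w\<in>?C. ?F (v + w) = ?F v + ?F w"
  proof (intro ballI)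
    fix v w assume v: "v \<in> ?C" and w: "w \<in> ?C"
    have vw: "v + w \<in> ?C" using v w by simp
    have x: "vec_first v (2*m) \<in> carrier_vec (2*m)" "vec_first w (2*m) \<in> carrier_vec (2*m)" by auto
    show "?F (v + w) = ?F v + ?F w"
    proof (rule vec_eq_split)
      show "?F (v + w) \<in> ?C" by (rule FC)
      show "?F v + ?F w \<in> ?C" using FC[of v] FC[of w] by simp
      show "vec_first (?F (v + w)) (2*m) = vec_first (?F v + ?F w) (2*m)"
        unfolding vf_add[OF FC FC] Fvf vf_add[OF v w]
        by (rule mult_add_distrib_mat_vec[OF ATC x])
      show "?F (v + w) $ (2*m) = (?F v + ?F w) $ (2*m)"
      proof -
        have s: "(?F v + ?F w) $ (2*m) = ?F v $ (2*m) + ?F w $ (2*m)"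
          using FC[of w] by simp
        have t: "(v + w) $ (2*m) = v $ (2*m) + w $ (2*m)" using w by simp
        show ?thesis unfolding s Flast vf_add[OF v w] scalar_prod_add_distrib[OF kC x] t
          by (simp add: algebra_simps)
      qed
    qed
  qed
  have Fsmult: "\<forall>c. \<forall>v\<in>?C. ?F (c \<cdot>\<^sub>v v) = c \<cdot>\<^sub>v ?F v"
  proof (intro allI ballI)
    fix c and v :: "'a vec" assume v: "v \<in> ?C"
    have x: "vec_first v (2*m) \<in> carrier_vec (2*m)" by auto
    show "?F (c \<cdot>\<^sub>v v) = c \<cdot>\<^sub>v ?F v"
    proof (rule vec_eq_split)
      show "?F (c \<cdot>\<^sub>v v) \<in> ?C" by (rule FC)
      show "c \<cdot>\<^sub>v ?F v \<in> ?C" using FC[of v] by simp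
      show "vec_first (?F (c \<cdot>\<^sub>v v)) (2*m) = vec_first (c \<cdot>\<^sub>v ?F v) (2*m)"
        unfolding vf_smult[OF FC] Fvf vf_smult[OF v]
        by (rule mult_mat_vec[OF ATC x])
      show "?F (c \<cdot>\<^sub>v v) $ (2*m) = (c \<cdot>\<^sub>v ?F v) $ (2*m)"
      proof -
        have s: "(c \<cdot>\<^sub>v ?F v) $ (2*m) = c * ?F v $ (2*m)" using FC[of v] by simp
        have t: "(c \<cdot>\<^sub>v v) $ (2*m) = c * v $ (2*m)" using v by simp
        show ?thesis unfolding s Flast vf_smult[OF v] scalar_prod_smult_distrib[OF kC x] t
          by (simp add: algebra_simps)
      qed
    qed
  qed
  have Fbr: "\<forall>v\<in>?C. \<forall>w\<in>?C. ?F (heis_bracket m v w) = heis_bracket m (?F v) (?F w)"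
  proof (intro ballI)
    fix v w assume v: "v \<in> ?C" and w: "w \<in> ?C"
    let ?x = "vec_first v (2*m)" and ?y = "vec_first w (2*m)"
    have x: "?x \<in> carrier_vec (2*m)" "?y \<in> carrier_vec (2*m)" by auto
    have brC: "heis_bracket m a b \<in> ?C" for a b unfolding heis_bracket_def by simp
    have om: "omega m (?F v) (?F w) = \<mu> * omega m v w"
    proof -
      have "omega m (?F v) (?F w) = omega m (transpose_mat A *\<^sub>v ?x) (transpose_mat A *\<^sub>v ?y)"
        by (subst omega_vf) (simp only: Fvf)
      also have "\<dots> = (transpose_mat A *\<^sub>v ?x) \<bullet> (symp_J m *\<^sub>v (transpose_mat A *\<^sub>v ?y))"
        by (rule omega_J) (use ATC in auto)
      also have "\<dots> = ?x \<bullet> ((A * symp_J m * transpose_mat A) *\<^sub>v ?y)"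
        by (rule key_transpose[OF AC x])
      also have "\<dots> = ?x \<bullet> (\<mu> \<cdot>\<^sub>v (symp_J m *\<^sub>v ?y))"
        unfolding e1 smult_mat_vec[OF symp_J_carrier x(2)] ..
      also have "\<dots> = \<mu> * (?x \<bullet> (symp_J m *\<^sub>v ?y))"
        by (rule scalar_prod_smult_distrib[OF x(1)]) (rule mult_mat_vec_carrier[OF symp_J_carrier x(2)])
      also have "?x \<bullet> (symp_J m *\<^sub>v ?y) = omega m ?x ?y"
        by (rule omega_J[symmetric, OF x])
      also have "omega m ?x ?y = omega m v w" by (rule omega_vf[symmetric])
      finally show ?thesis .
    qed
    show "?F (heis_bracket m v w) = heis_bracket m (?F v) (?F w)"
    proof (rule vec_eq_split)
      show "?F (heis_bracket m v w) \<in> ?C" by (rule FC)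
      show "heis_bracket m (?F v) (?F w) \<in> ?C" by (rule brC)
      show "vec_first (?F (heis_bracket m v w)) (2*m) = vec_first (heis_bracket m (?F v) (?F w)) (2*m)"
        unfolding Fvf vf_bracket by (rule mat_vec_zero[OF ATC])
      show "?F (heis_bracket m v w) $ (2*m) = heis_bracket m (?F v) (?F w) $ (2*m)"
        unfolding Flast vf_bracket using kC om by (simp add: heis_bracket_omega)
    qed
  qed
  have Fpm: "\<forall>v\<in>?C. ?F (heis_pmap m lam v) = heis_pmap m lam' (?F v)"
  proof (intro ballI)
    fix v assume v: "v \<in> ?C"
    let ?x = "vec_first v (2*m)"
    have x: "?x \<in> carrier_vec (2*m)" by auto
    have pmC: "heis_pmap m l a \<in> ?C" for l a unfolding heis_pmap_def by simp
    have ATx: "(transpose_mat A *\<^sub>v ?x) $ j = (\<Sum>i<2*m. A $$ (i,j) * v $ i)" if j: "j < 2*m" for j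
      using j AC unfolding vec_first_def by (simp add: scalar_prod_def atLeast0LessThan)
    have kx: "k \<bullet> ?x = (\<Sum>i<2*m. k $ i * v $ i)"
      using kC unfolding vec_first_def by (simp add: scalar_prod_def atLeast0LessThan)
    have E2: "\<mu> * lam $ i = (\<Sum>j<2*m. A $$ (i,j) ^ ?p * lam' $ j) + lam' $ (2*m) * k $ i ^ ?p" if i: "i < 2*m" for i
    proof -
      have "(\<mu> \<cdot>\<^sub>v vec_first lam (2*m)) $ i = (map_mat (\<lambda>x. x ^ ?p) A *\<^sub>v vec_first lam' (2*m)
         + lam' $ (2*m) \<cdot>\<^sub>v map_vec (\<lambda>x. x ^ ?p) k) $ i" using e2 by simp
      then show ?thesis using i AC kC unfolding vec_first_def by (simp add: scalar_prod_def atLeast0LessThan)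
    qed
    have "heis_pmap m lam' (?F v) $ (2*m) = (\<Sum>j<2*m+1. (?F v $ j) ^ ?p * lam' $ j)"
      unfolding heis_pmap_def by simp
    also have "\<dots> = (\<Sum>j<2*m. ((transpose_mat A *\<^sub>v ?x) $ j) ^ ?p * lam' $ j)
        + (k \<bullet> ?x + \<mu> * v $ (2*m)) ^ ?p * lam' $ (2*m)"
      unfolding psi_map_def by simp
    also have "(\<Sum>j<2*m. ((transpose_mat A *\<^sub>v ?x) $ j) ^ ?p * lam' $ j)
        = (\<Sum>j<2*m. (\<Sum>i<2*m. A $$ (i,j) ^ ?p * v $ i ^ ?p) * lam' $ j)"
      by (intro sum.cong refl) (simp add: ATx frob_sum[OF pr] power_mult_distrib)
    also have "\<dots> = (\<Sum>i<2*m. v $ i ^ ?p * (\<Sum>j<2*m. A $$ (i,j) ^ ?p * lam' $ j))"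
      unfolding sum_distrib_right sum_distrib_left
      by (subst sum.swap) (intro sum.cong refl, simp add: ac_simps)
    also have "(k \<bullet> ?x + \<mu> * v $ (2*m)) ^ ?p = (\<Sum>i<2*m. k $ i ^ ?p * v $ i ^ ?p) + \<mu> ^ ?p * v $ (2*m) ^ ?p"
      by (simp add: kx frob_add[OF pr] frob_sum[OF pr] power_mult_distrib)
    finally have "heis_pmap m lam' (?F v) $ (2*m) =
        (\<Sum>i<2*m. v $ i ^ ?p * (\<Sum>j<2*m. A $$ (i,j) ^ ?p * lam' $ j))
        + ((\<Sum>i<2*m. k $ i ^ ?p * v $ i ^ ?p) + \<mu> ^ ?p * v $ (2*m) ^ ?p) * lam' $ (2*m)" .
    also have "\<dots> = (\<Sum>i<2*m. v $ i ^ ?p * ((\<Sum>j<2*m. A $$ (i,j) ^ ?p * lam' $ j) + lam' $ (2*m) * k $ i ^ ?p))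
        + \<mu> ^ ?p * lam' $ (2*m) * v $ (2*m) ^ ?p"
      by (simp add: algebra_simps sum.distrib sum_distrib_left sum_distrib_right)
    also have "\<dots> = (\<Sum>i<2*m. v $ i ^ ?p * (\<mu> * lam $ i)) + \<mu> * lam $ (2*m) * v $ (2*m) ^ ?p"
    proof -
      have "\<mu> ^ ?p = \<mu> * \<mu> ^ (?p - 1)" using p0 by (metis Suc_diff_1 power_Suc)
      then have "\<mu> ^ ?p * lam' $ (2*m) = \<mu> * lam $ (2*m)" using e3 by simp
      moreover have "(\<Sum>i<2*m. v $ i ^ ?p * ((\<Sum>j<2*m. A $$ (i,j) ^ ?p * lam' $ j) + lam' $ (2*m) * k $ i ^ ?p))
          = (\<Sum>i<2*m. v $ i ^ ?p * (\<mu> * lam $ i))"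
        by (intro sum.cong refl) (simp add: E2)
      ultimately show ?thesis by simp
    qed
    also have "\<dots> = \<mu> * (\<Sum>j<2*m+1. v $ j ^ ?p * lam $ j)"
      by (simp add: sum_distrib_left algebra_simps)
    finally have L: "heis_pmap m lam' (?F v) $ (2*m) = \<mu> * (\<Sum>j<2*m+1. v $ j ^ ?p * lam $ j)" .
    show "?F (heis_pmap m lam v) = heis_pmap m lam' (?F v)"
    proof (rule vec_eq_split)
      show "?F (heis_pmap m lam v) \<in> ?C" by (rule FC)
      show "heis_pmap m lam' (?F v) \<in> ?C" by (rule pmC)
      show "vec_first (?F (heis_pmap m lam v)) (2*m) = vec_first (heis_pmap m lam' (?F v)) (2*m)"
        unfolding Fvf vf_pmap by (rule mat_vec_zero[OF ATC])
      show "?F (heis_pmap m lam v) $ (2*m) = heis_pmap m lam' (?F v) $ (2*m)"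
        unfolding Flast vf_pmap L using kC by (simp add: heis_pmap_def)
    qed
  qed
  have inj: "inj_on ?F ?C"
  proof (rule inj_onI)
    fix v w assume v: "v \<in> ?C" and w: "w \<in> ?C" and eq: "?F v = ?F w"
    let ?x = "vec_first v (2*m)" and ?y = "vec_first w (2*m)"
    have x: "?x \<in> carrier_vec (2*m)" "?y \<in> carrier_vec (2*m)" by auto
    have "transpose_mat A *\<^sub>v ?x = transpose_mat A *\<^sub>v ?y" using eq Fvf by metis
    then have "transpose_mat B *\<^sub>v (transpose_mat A *\<^sub>v ?x) = transpose_mat B *\<^sub>v (transpose_mat A *\<^sub>v ?y)" by simp
    then have xy: "?x = ?y"
      using assoc_mult_mat_vec[OF BTC ATC x(1)] assoc_mult_mat_vec[OF BTC ATC x(2)] BTAT x by simp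
    have "k \<bullet> ?x + \<mu> * v $ (2*m) = k \<bullet> ?y + \<mu> * w $ (2*m)" using eq Flast by metis
    then have "v $ (2*m) = w $ (2*m)" using xy mu0 by simp
    then show "v = w" by (rule vec_eq_split[OF v w xy])
  qed
  have surj: "?F ` ?C = ?C"
  proof
    show "?F ` ?C \<subseteq> ?C" using FC by blast
    show "?C \<subseteq> ?F ` ?C"
    proof
      fix w assume w: "w \<in> ?C"
      let ?y = "transpose_mat B *\<^sub>v vec_first w (2*m)"
      have y: "?y \<in> carrier_vec (2*m)" using BTC by simp
      define v where "v = vec (2*m+1) (\<lambda>i. if i < 2*m then ?y $ i else (w $ (2*m) - k \<bullet> ?y) / \<mu>)"
      have v: "v \<in> ?C" unfolding v_def by simp
      have vf: "vec_first v (2*m) = ?y"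
      proof (rule eq_vecI)
        show "dim_vec (vec_first v (2*m)) = dim_vec ?y" using y by (simp only: dim_vec_first carrier_vecD)
        fix i assume "i < dim_vec ?y"
        then have i: "i < 2*m" using dB1 by simp
        have "vec_first v (2*m) $ i = v $ i" using i unfolding vec_first_def by simp
        also have "\<dots> = ?y $ i" using i unfolding v_def by simp
        finally show "vec_first v (2*m) $ i = ?y $ i" .
      qed
      have "?F v = w"
      proof (rule vec_eq_split[OF FC w])
        have "vec_first (?F v) (2*m) = transpose_mat A *\<^sub>v ?y" unfolding Fvf vf ..
        also have "\<dots> = (transpose_mat A * transpose_mat B) *\<^sub>v vec_first w (2*m)"
          by (rule assoc_mult_mat_vec[symmetric, OF ATC BTC]) simp
        also have "\<dots> = vec_first w (2*m)" unfolding ATBT by simp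
        finally show "vec_first (?F v) (2*m) = vec_first w (2*m)" .
        show "?F v $ (2*m) = w $ (2*m)" unfolding Flast vf using mu0 by (simp add: v_def)
      qed
      then show "w \<in> ?F ` ?C" using v by blast
    qed
  qed
  have "restricted_heis_iso m lam lam' ?F"
    unfolding restricted_heis_iso_def bij_betw_def using inj surj Fadd Fsmult Fbr Fpm by blast
  then show ?thesis unfolding restricted_heis_isomorphic_def by blast
qed



lemma forward:
  fixes lam lam' :: "'a::field vec"
  assumes p: "CHAR('a) > 2" and m: "m \<ge> 1"
    and lam: "lam \<in> carrier_vec (2*m+1)" and lam': "lam' \<in> carrier_vec (2*m+1)"
    and iso: "restricted_heis_iso m lam lam' \<Psi>"
  shows "\<exists>A k (\<mu>::'a). A \<in> carrier_mat (2*m) (2*m) \<and> invertible_mat A \<and>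
       k \<in> carrier_vec (2*m) \<and> (det A)^2 = \<mu>^(2*m) \<and>
       A * symp_J m * transpose_mat A = \<mu> \<cdot>\<^sub>m symp_J m \<and>
       \<mu> \<cdot>\<^sub>v vec_first lam (2*m) =
         map_mat (\<lambda>x. x ^ CHAR('a)) A *\<^sub>v vec_first lam' (2*m)
         + lam' $ (2*m) \<cdot>\<^sub>v map_vec (\<lambda>x. x ^ CHAR('a)) k \<and>
       lam $ (2*m) = \<mu> ^ (CHAR('a) - 1) * lam' $ (2*m)"
proof -
  let ?n = "2*m+1"
  let ?p = "CHAR('a)"
  define z :: "'a vec" where "z = unit_vec ?n (2*m)"
  define e :: "nat \<Rightarrow> 'a vec" where "e i = unit_vec ?n i" for i
  have p0: "?p > 0" using p by simp
  have bij: "bij_betw \<Psi> (carrier_vec ?n) (carrier_vec ?n)" using iso unfolding restricted_heis_iso_def by blast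
  have PC: "\<And>v. v \<in> carrier_vec ?n \<Longrightarrow> \<Psi> v \<in> carrier_vec ?n" using bij_betw_apply[OF bij] by blast
  have inj: "inj_on \<Psi> (carrier_vec ?n)" using bij bij_betw_imp_inj_on by blast
  have Psm: "\<And>c v. v \<in> carrier_vec ?n \<Longrightarrow> \<Psi> (c \<cdot>\<^sub>v v) = c \<cdot>\<^sub>v \<Psi> v"
    using iso unfolding restricted_heis_iso_def by blast
  have Pbr: "\<And>v w. v \<in> carrier_vec ?n \<Longrightarrow> w \<in> carrier_vec ?n \<Longrightarrow>
        \<Psi> (heis_bracket m v w) = heis_bracket m (\<Psi> v) (\<Psi> w)"
    using iso unfolding restricted_heis_iso_def by blast
  have Ppm: "\<And>v. v \<in> carrier_vec ?n \<Longrightarrow> \<Psi> (heis_pmap m lam v) = heis_pmap m lam' (\<Psi> v)"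
    using iso unfolding restricted_heis_iso_def by blast
  have zC: "z \<in> carrier_vec ?n" and eC: "\<And>i. e i \<in> carrier_vec ?n" unfolding z_def e_def by auto
  have m0: "0 < m" using m by simp
  have Jm: "symp_J m $$ (0, m) = (1::'a)" using m0 by (simp add: symp_J_index)
  have z_br0: "heis_bracket m (e 0) (e m) = (symp_J m $$ (0,m) :: 'a) \<cdot>\<^sub>v z"
    unfolding e_def z_def by (rule br_unit) (use m0 in auto)
  have z_br: "z = heis_bracket m (e 0) (e m)"
    unfolding z_br0 Jm by simp
  define \<nu> where "\<nu> = \<Psi> z $ (2*m)"
  have Pz: "\<Psi> z = \<nu> \<cdot>\<^sub>v z"
  proof -
    have "\<Psi> z = heis_bracket m (\<Psi> (e 0)) (\<Psi> (e m))" using z_br Pbr eC by simp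
    then have "\<Psi> z = vec ?n (\<lambda>i. if i = 2*m then omega m (\<Psi> (e 0)) (\<Psi> (e m)) else 0)"
      by (simp add: heis_bracket_omega)
    then show ?thesis unfolding \<nu>_def z_def by (intro eq_vecI) (auto simp: unit_vec_def)
  qed
  have Pcz: "\<And>c. \<Psi> (c \<cdot>\<^sub>v z) = (c * \<nu>) \<cdot>\<^sub>v z"
    using Psm[OF zC] Pz by (simp add: smult_smult_assoc)
  have nu0: "\<nu> \<noteq> 0"
  proof
    assume "\<nu> = 0"
    then have "\<Psi> (0 \<cdot>\<^sub>v z) = \<Psi> z" using Pcz Pz by simp
    then have "0 \<cdot>\<^sub>v z = z" using inj zC by (meson inj_onD smult_carrier_vec)
    then have "(0 \<cdot>\<^sub>v z) $ (2*m) = z $ (2*m)" by simp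
    then show False unfolding z_def by simp
  qed
  define A :: "'a mat" where "A = mat (2*m) (2*m) (\<lambda>(i,j). \<Psi> (e i) $ j)"
  define k :: "'a vec" where "k = vec (2*m) (\<lambda>i. \<Psi> (e i) $ (2*m))"
  have AC: "A \<in> carrier_mat (2*m) (2*m)" unfolding A_def by simp
  have kC: "k \<in> carrier_vec (2*m)" unfolding k_def by simp
  have ATe: "transpose_mat A *\<^sub>v unit_vec (2*m) i = vec_first (\<Psi> (e i)) (2*m)" if i: "i < 2*m" for i
    using i unfolding A_def vec_first_def by (intro eq_vecI) auto
  have eq1: "A * symp_J m * transpose_mat A = \<nu> \<cdot>\<^sub>m symp_J m"
  proof (rule eq_matI)
    fix i j assume "i < dim_row (\<nu> \<cdot>\<^sub>m symp_J m)" "j < dim_col (\<nu> \<cdot>\<^sub>m symp_J m)"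
    then have i: "i < 2*m" and j: "j < 2*m" by auto
    have M: "A * symp_J m * transpose_mat A \<in> carrier_mat (2*m) (2*m)"
      using AC by (metis mult_carrier_mat symp_J_carrier transpose_carrier_mat)
    have "(A * symp_J m * transpose_mat A) $$ (i,j)
        = unit_vec (2*m) i \<bullet> ((A * symp_J m * transpose_mat A) *\<^sub>v unit_vec (2*m) j)"
      by (rule mat_entry_unit[OF M i j])
    also have "\<dots> = (transpose_mat A *\<^sub>v unit_vec (2*m) i) \<bullet> (symp_J m *\<^sub>v (transpose_mat A *\<^sub>v unit_vec (2*m) j))"
      by (rule key_transpose[OF AC, symmetric]) auto
    also have "\<dots> = vec_first (\<Psi> (e i)) (2*m) \<bullet> (symp_J m *\<^sub>v vec_first (\<Psi> (e j)) (2*m))"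
      using ATe i j by simp
    also have "\<dots> = omega m (\<Psi> (e i)) (\<Psi> (e j))"
      by (subst omega_vf, rule omega_J[symmetric]) auto
    also have "\<dots> = heis_bracket m (\<Psi> (e i)) (\<Psi> (e j)) $ (2*m)"
      by (simp add: heis_bracket_omega)
    also have "\<dots> = \<Psi> (heis_bracket m (e i) (e j)) $ (2*m)"
      using Pbr eC by simp
    also have "\<dots> = \<Psi> (symp_J m $$ (i,j) \<cdot>\<^sub>v z) $ (2*m)"
    proof -
      have "heis_bracket m (e i) (e j) = (symp_J m $$ (i,j) :: 'a) \<cdot>\<^sub>v z"
        unfolding e_def z_def by (rule br_unit[OF i j])
      then show ?thesis by (simp only:)
    qed
    also have "\<dots> = \<nu> * symp_J m $$ (i,j)"
      unfolding Pcz by (simp add: z_def mult.commute)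
    finally show "(A * symp_J m * transpose_mat A) $$ (i,j) = (\<nu> \<cdot>\<^sub>m symp_J m) $$ (i,j)"
      using i j by simp
  qed (use AC in \<open>auto simp: A_def\<close>)
  have detA: "(det A)^2 = \<nu>^(2*m)"
  proof -
    have "det (A * symp_J m * transpose_mat A) = det A * det (symp_J m) * det A"
      using AC by (simp add: det_mult[of _ "2*m"] det_transpose[OF AC])
    moreover have "det (\<nu> \<cdot>\<^sub>m symp_J m) = \<nu>^(2*m) * det (symp_J m)" by simp
    ultimately have "det A * det A * det (symp_J m) = \<nu>^(2*m) * det (symp_J m)"
      using eq1 by (metis mult.commute mult.left_commute)
    moreover have "det (symp_J m :: 'a mat) \<noteq> 0" by (rule det_symp_J)
    ultimately show ?thesis by (simp add: power2_eq_square)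
  qed
  have invA: "invertible_mat A"
    using det_ne0_invertible[OF AC] detA nu0 by (metis power_not_zero zero_power2)
  have eq2: "\<nu> \<cdot>\<^sub>v vec_first lam (2*m) =
         map_mat (\<lambda>x. x ^ ?p) A *\<^sub>v vec_first lam' (2*m)
         + lam' $ (2*m) \<cdot>\<^sub>v map_vec (\<lambda>x. x ^ ?p) k"
  proof (rule eq_vecI)
    fix i assume "i < dim_vec (map_mat (\<lambda>x. x ^ ?p) A *\<^sub>v vec_first lam' (2*m)
         + lam' $ (2*m) \<cdot>\<^sub>v map_vec (\<lambda>x. x ^ ?p) k)"
    then have i: "i < 2*m" using AC kC by simp
    have "heis_pmap m lam (e i) = lam $ i \<cdot>\<^sub>v z"
      using pmap_unit[where i=i and m=m and c="1::'a" and lam=lam] i p0 unfolding e_def z_def by simp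
    then have "\<Psi> (heis_pmap m lam (e i)) $ (2*m) = \<nu> * lam $ i"
      using Pcz by (simp add: z_def)
    moreover have "\<Psi> (heis_pmap m lam (e i)) $ (2*m) = (\<Sum>j<2*m+1. \<Psi> (e i) $ j ^ ?p * lam' $ j)"
      using Ppm eC by (simp add: heis_pmap_def)
    moreover have "(\<Sum>j<2*m+1. \<Psi> (e i) $ j ^ ?p * lam' $ j)
        = (\<Sum>j<2*m. \<Psi> (e i) $ j ^ ?p * lam' $ j) + \<Psi> (e i) $ (2*m) ^ ?p * lam' $ (2*m)"
      by simp
    moreover have "(map_mat (\<lambda>x. x ^ ?p) A *\<^sub>v vec_first lam' (2*m)) $ i = (\<Sum>j<2*m. \<Psi> (e i) $ j ^ ?p * lam' $ j)"
      using i unfolding A_def vec_first_def by (simp add: scalar_prod_def atLeast0LessThan)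
    ultimately show "(\<nu> \<cdot>\<^sub>v vec_first lam (2*m)) $ i = (map_mat (\<lambda>x. x ^ ?p) A *\<^sub>v vec_first lam' (2*m)
         + lam' $ (2*m) \<cdot>\<^sub>v map_vec (\<lambda>x. x ^ ?p) k) $ i"
      using i AC kC unfolding k_def vec_first_def by (simp add: mult.commute)
  qed (use AC kC in simp)
  have eq3: "lam $ (2*m) = \<nu> ^ (?p - 1) * lam' $ (2*m)"
  proof -
    have "heis_pmap m lam z = lam $ (2*m) \<cdot>\<^sub>v z"
      using pmap_unit[where i="2*m" and m=m and c="1::'a" and lam=lam] p0 unfolding z_def by simp
    then have "\<Psi> (heis_pmap m lam z) $ (2*m) = lam $ (2*m) * \<nu>"
      using Pcz by (simp add: z_def)
    moreover have "\<Psi> (heis_pmap m lam z) = heis_pmap m lam' (\<nu> \<cdot>\<^sub>v z)"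
      using Ppm zC Pz by simp
    moreover have "heis_pmap m lam' (\<nu> \<cdot>\<^sub>v z) = (\<nu> ^ ?p * lam' $ (2*m)) \<cdot>\<^sub>v z"
      using pmap_unit[where i="2*m" and m=m and c=\<nu> and lam=lam'] p0 unfolding z_def by simp
    ultimately have "lam $ (2*m) * \<nu> = \<nu> ^ ?p * lam' $ (2*m)" by (simp add: z_def)
    moreover have "\<nu> ^ ?p = \<nu> ^ (?p - 1) * \<nu>" using p0
      by (metis Suc_diff_1 power_Suc2)
    ultimately have "lam $ (2*m) * \<nu> = (\<nu> ^ (?p - 1) * lam' $ (2*m)) * \<nu>" by (simp add: ac_simps)
    then show ?thesis using nu0 by simp
  qed
  show ?thesis using AC invA kC detA eq1 eq2 eq3 by blast
qed


theorem theorem3p1: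
  fixes m :: nat and lam lam' :: "'a::field vec"
  assumes "CHAR('a) > 2"
    and "m \<ge> 1"
    and "lam \<in> carrier_vec (2*m+1)" and "lam' \<in> carrier_vec (2*m+1)"
  shows "restricted_heis_isomorphic m lam lam' \<longleftrightarrow>
    (\<exists>A k (\<mu>::'a). A \<in> carrier_mat (2*m) (2*m) \<and> invertible_mat A \<and>
       k \<in> carrier_vec (2*m) \<and> (det A)^2 = \<mu>^(2*m) \<and>
       A * symp_J m * transpose_mat A = \<mu> \<cdot>\<^sub>m symp_J m \<and>
       \<mu> \<cdot>\<^sub>v vec_first lam (2*m) =
         map_mat (\<lambda>x. x ^ CHAR('a)) A *\<^sub>v vec_first lam' (2*m)
         + lam' $ (2*m) \<cdot>\<^sub>v map_vec (\<lambda>x. x ^ CHAR('a)) k \<and>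
       lam $ (2*m) = \<mu> ^ (CHAR('a) - 1) * lam' $ (2*m))"
proof
  assume "restricted_heis_isomorphic m lam lam'"
  then obtain \<Psi> where iso: "restricted_heis_iso m lam lam' \<Psi>"
    unfolding restricted_heis_isomorphic_def by blast
  show "\<exists>A k (\<mu>::'a). A \<in> carrier_mat (2*m) (2*m) \<and> invertible_mat A \<and>
       k \<in> carrier_vec (2*m) \<and> (det A)^2 = \<mu>^(2*m) \<and>
       A * symp_J m * transpose_mat A = \<mu> \<cdot>\<^sub>m symp_J m \<and>
       \<mu> \<cdot>\<^sub>v vec_first lam (2*m) =
         map_mat (\<lambda>x. x ^ CHAR('a)) A *\<^sub>v vec_first lam' (2*m)
         + lam' $ (2*m) \<cdot>\<^sub>v map_vec (\<lambda>x. x ^ CHAR('a)) k \<and>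
       lam $ (2*m) = \<mu> ^ (CHAR('a) - 1) * lam' $ (2*m)"
    by (rule forward[OF assms iso])
next
  assume "\<exists>A k (\<mu>::'a). A \<in> carrier_mat (2*m) (2*m) \<and> invertible_mat A \<and>
       k \<in> carrier_vec (2*m) \<and> (det A)^2 = \<mu>^(2*m) \<and>
       A * symp_J m * transpose_mat A = \<mu> \<cdot>\<^sub>m symp_J m \<and>
       \<mu> \<cdot>\<^sub>v vec_first lam (2*m) =
         map_mat (\<lambda>x. x ^ CHAR('a)) A *\<^sub>v vec_first lam' (2*m)
         + lam' $ (2*m) \<cdot>\<^sub>v map_vec (\<lambda>x. x ^ CHAR('a)) k \<and>
       lam $ (2*m) = \<mu> ^ (CHAR('a) - 1) * lam' $ (2*m)"
  then obtain A k \<mu> where h: "A \<in> carrier_mat (2*m) (2*m)" "invertible_mat A"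
       "k \<in> carrier_vec (2*m)" "(det A)^2 = (\<mu>::'a)^(2*m)"
       "A * symp_J m * transpose_mat A = \<mu> \<cdot>\<^sub>m symp_J m"
       "\<mu> \<cdot>\<^sub>v vec_first lam (2*m) =
         map_mat (\<lambda>x. x ^ CHAR('a)) A *\<^sub>v vec_first lam' (2*m)
         + lam' $ (2*m) \<cdot>\<^sub>v map_vec (\<lambda>x. x ^ CHAR('a)) k"
       "lam $ (2*m) = \<mu> ^ (CHAR('a) - 1) * lam' $ (2*m)"
    by blast
  show "restricted_heis_isomorphic m lam lam'"
    by (rule backward[OF assms h])
qed

end
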